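(* Let $\mathcal{T}$ be a single-elimination tournament with at least $2$ vertices and $\widehat{B}$ a bracket of $\mathcal{T}$. Let $a,b$ be distinct players such that the unique out-neighbour $x_a$ of $a$ satisfies $b\in\{\widehat{B}(v):v\in N^-(x_a)\}$. Then for any brackets $B,B'$ and any scoring system $\sigma$ with $\mathrm{score}_\sigma(\widehat{B}_a,B)=\mathrm{score}_\sigma(\widehat{B}_a,B')$ and $\mathrm{score}_\sigma(\widehat{B}_b,B)=\mathrm{score}_\sigma(\widehat{B}_b,B')$, we have for all $x\in M(\mathcal{T})$ that $B(x)=a$ if and only if $B'(x)=a$.
   Context: A single-elimination tournament is a finite directed graph $\mathcal{T}$ such that: (a) $\mathcal{T}$ has exactly one sink (vertex with no out-neighbours); (b) every non-sink vertex has exactly one out-neighbour; (c) $\mathcal{T}$ has no directed cycles; (d) $|N^-(v)|\ne 1$ for every vertex $v$, where $N^-(v)$ denotes the set of in-neighbours of $v$. The players $P(\mathcal{T})$ are the sources and the matches are $M(\mathcal{T})=V(\mathcal{T})\setminus P(\mathcal{T})$. For a vertex $u$, $P(u)$ is the set of players $c$ for which there is a directed walk from $c$ to $u$ (length $0$ allowed). A bracket is a function $B:V(\mathcal{T})\to P(\mathcal{T})$ with $B(c)=c$ for every player $c$ and $B(x)\in\{B(u):u\in N^-(x)\}$ for every match $x$. For a bracket $\widehat{B}$ and player $c$, $\widehat{B}_c$ is the bracket with $\widehat{B}_c(u)=c$ if $c\in P(u)$ and $\widehat{B}_c(u)=\widehat{B}(u)$ otherwise. A scoring system is any function $\sigma:M(\mathcal{T})\to\mathbb{R}_{>0}$,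 and $\mathrm{score}_\sigma(B,B')=\sum_{x\in M(\mathcal{T}):\,B(x)=B'(x)}\sigma(x)$. *)

theory Defs
  imports Complex_Main
begin

definition out_nbrs :: "'v rel \<Rightarrow> 'v \<Rightarrow> 'v set" where
  "out_nbrs E v = {w. (v, w) \<in> E}"

definition in_nbrs :: "'v rel \<Rightarrow> 'v \<Rightarrow> 'v set" where
  "in_nbrs E v = {u. (u, v) \<in> E}"

definition single_elim_tournament :: "'v set \<Rightarrow> 'v rel \<Rightarrow> bool" where
  "single_elim_tournament V E \<longleftrightarrow>
     finite V \<and> E \<subseteq> V \<times> V \<and>
     (\<exists>!s. s \<in> V \<and> out_nbrs E s = {}) \<and>
     (\<forall>v\<in>V. out_nbrs E v \<noteq> {} \<longrightarrow> card (out_nbrs E v) = 1) \<and>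
     (\<forall>v\<in>V. (v, v) \<notin> E\<^sup>+) \<and>
     (\<forall>v\<in>V. card (in_nbrs E v) \<noteq> 1)"

definition players :: "'v set \<Rightarrow> 'v rel \<Rightarrow> 'v set" where
  "players V E = {v \<in> V. in_nbrs E v = {}}"

definition matches :: "'v set \<Rightarrow> 'v rel \<Rightarrow> 'v set" where
  "matches V E = V - players V E"

definition players_below :: "'v set \<Rightarrow> 'v rel \<Rightarrow> 'v \<Rightarrow> 'v set" where
  "players_below V E u = {c \<in> players V E. (c, u) \<in> E\<^sup>*}"

definition is_bracket :: "'v set \<Rightarrow> 'v rel \<Rightarrow> ('v \<Rightarrow> 'v) \<Rightarrow> bool" where
  "is_bracket V E B \<longleftrightarrow>
     (\<forall>c\<in>players V E. B c = c) \<and>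
     (\<forall>x\<in>matches V E. B x \<in> B ` in_nbrs E x)"

definition bracket_with :: "'v set \<Rightarrow> 'v rel \<Rightarrow> ('v \<Rightarrow> 'v) \<Rightarrow> 'v \<Rightarrow> ('v \<Rightarrow> 'v)" where
  "bracket_with V E B c = (\<lambda>u. if c \<in> players_below V E u then c else B u)"

definition score :: "'v set \<Rightarrow> 'v rel \<Rightarrow> ('v \<Rightarrow> real) \<Rightarrow> ('v \<Rightarrow> 'v) \<Rightarrow> ('v \<Rightarrow> 'v) \<Rightarrow> real" where
  "score V E \<sigma> B B' = (\<Sum>x\<in>{x \<in> matches V E. B x = B' x}. \<sigma> x)"

end

theory Submission
  imports Defs
begin

lemma set_sv:
  assumes T: "single_elim_tournament V E"
  shows "single_valued E"
proof (rule single_valuedI)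
  fix x y z assume xy: "(x, y) \<in> E" and xz: "(x, z) \<in> E"
  have EV: "E \<subseteq> V \<times> V" using T unfolding single_elim_tournament_def by blast
  have xV: "x \<in> V" using xy EV by blast
  have ne: "out_nbrs E x \<noteq> {}" using xy by (auto simp: out_nbrs_def)
  have "card (out_nbrs E x) = 1" using T xV ne unfolding single_elim_tournament_def by blast
  then obtain w where "out_nbrs E x = {w}" by (auto simp: card_Suc_eq)
  moreover have "y \<in> out_nbrs E x" "z \<in> out_nbrs E x" using xy xz by (auto simp: out_nbrs_def)
  ultimately show "y = z" by simp
qed

lemma set_EV:
  assumes T: "single_elim_tournament V E"
  shows "E \<subseteq> V \<times> V"
  using T unfolding single_elim_tournament_def by blast

lemma set_acyc:
  assumes T: "single_elim_tournament V E"
  shows "(x, x) \<notin> E\<^sup>+"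
proof
  assume h: "(x, x) \<in> E\<^sup>+"
  have "x \<in> V" using h trancl_subset_Sigma[OF set_EV[OF T]] by blast
  then show False using h T unfolding single_elim_tournament_def by blast
qed

lemma set_wf:
  assumes T: "single_elim_tournament V E"
  shows "wf E"
proof (rule finite_acyclic_wf)
  have "finite V" using T unfolding single_elim_tournament_def by blast
  then show "finite E" using set_EV[OF T] by (meson finite_SigmaI finite_subset)
  show "acyclic E" using set_acyc[OF T] unfolding acyclic_def by blast
qed

lemma bracket_below:
  assumes T: "single_elim_tournament V E" and B: "is_bracket V E B"
  shows "u \<in> V \<Longrightarrow> B u \<in> players_below V E u"
proof (induction u rule: wf_induct_rule[OF set_wf[OF T]])
  case (1 u)
  show ?case
  proof (cases "u \<in> players V E")
    case True
    then show ?thesis using B unfolding is_bracket_def players_below_def by auto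
  next
    case False
    then have "u \<in> matches V E" using 1 by (auto simp: matches_def)
    then obtain w where w: "w \<in> in_nbrs E u" "B u = B w" using B unfolding is_bracket_def by auto
    have wu: "(w, u) \<in> E" using w by (auto simp: in_nbrs_def)
    then have "w \<in> V" using set_EV[OF T] by blast
    then have "B w \<in> players_below V E w" using 1 wu by blast
    then show ?thesis using w wu unfolding players_below_def
      by (auto intro: rtrancl_into_rtrancl)
  qed
qed

lemma set_L3:
  assumes T: "single_elim_tournament V E"
    and yz: "(y, z) \<in> E" and wz: "(w, z) \<in> E" and yw: "(y, w) \<in> E\<^sup>+"
  shows False
proof -
  obtain y1 where y1: "(y, y1) \<in> E" "(y1, w) \<in> E\<^sup>*" using yw by (meson tranclD)
  have "y1 = z" using set_sv[OF T] y1(1) yz by (auto dest: single_valuedD)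
  then have "(z, z) \<in> E\<^sup>+" using y1(2) wz by (auto intro: rtrancl_into_trancl1)
  then show False using set_acyc[OF T] by blast
qed

lemma set_U:
  assumes T: "single_elim_tournament V E"
    and cw: "(c, w) \<in> E\<^sup>*" and cy: "(c, y) \<in> E\<^sup>*"
    and yz: "(y, z) \<in> E" and wz: "(w, z) \<in> E"
  shows "w = y"
proof (rule ccontr)
  assume ne: "w \<noteq> y"
  from single_valued_confluent[OF set_sv[OF T] cy cw]
  have "(y, w) \<in> E\<^sup>* \<or> (w, y) \<in> E\<^sup>*" .
  then show False
  proof
    assume "(y, w) \<in> E\<^sup>*"
    then have "(y, w) \<in> E\<^sup>+" using ne by (auto simp: rtrancl_eq_or_trancl)
    then show False using set_L3[OF T yz wz] by blast
  next
    assume "(w, y) \<in> E\<^sup>*"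
    then have "(w, y) \<in> E\<^sup>+" using ne by (auto simp: rtrancl_eq_or_trancl)
    then show False using set_L3[OF T wz yz] by blast
  qed
qed

lemma set_L1:
  assumes T: "single_elim_tournament V E" and B: "is_bracket V E B"
    and yx: "(y, x) \<in> E\<^sup>*" and cy: "(c, y) \<in> E\<^sup>*" and Bx: "B x = c"
  shows "B y = c"
  using yx Bx
proof (induction rule: rtrancl_induct)
  case base
  then show ?case by simp
next
  case (step x' x)
  have xV: "x \<in> V" using step(2) set_EV[OF T] by blast
  have "x \<notin> players V E" using step(2) by (auto simp: players_def in_nbrs_def)
  then have "x \<in> matches V E" using xV by (auto simp: matches_def)
  then obtain w where w: "w \<in> in_nbrs E x" "B x = B w" using B unfolding is_bracket_def by auto
  have wx: "(w, x) \<in> E" using w by (auto simp: in_nbrs_def)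
  then have "w \<in> V" using set_EV[OF T] by blast
  then have "B w \<in> players_below V E w" using bracket_below[OF T B] by blast
  then have cw: "(c, w) \<in> E\<^sup>*" using w step(4) unfolding players_below_def by auto
  have "(c, x') \<in> E\<^sup>*" using cy step(1) by (rule rtrancl_trans)
  then have "w = x'" using set_U[OF T cw _ step(2) wx] by blast
  then show ?case using step w by simp
qed

lemma sum_strict_sub:
  fixes \<sigma> :: "'a \<Rightarrow> real"
  assumes "S \<subset> S'" "finite S'" "\<forall>x\<in>S'. \<sigma> x > 0"
  shows "sum \<sigma> S < sum \<sigma> S'"
proof -
  have "sum \<sigma> S' = sum \<sigma> (S' - S) + sum \<sigma> S"
    using assms by (meson psubset_imp_subset sum.subset_diff)
  moreover have "sum \<sigma> (S' - S) > 0"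
    using assms by (intro sum_pos) auto
  ultimately show ?thesis by simp
qed

theorem lemma5p9:
  fixes V :: "'v set" and E :: "'v rel" and Bh B B' :: "'v \<Rightarrow> 'v"
    and \<sigma> :: "'v \<Rightarrow> real" and a b xa :: 'v
  assumes T: "single_elim_tournament V E"
    and V2: "card V \<ge> 2"
    and Bh: "is_bracket V E Bh"
    and a: "a \<in> players V E" and b: "b \<in> players V E" and ab: "a \<noteq> b"
    and xa: "out_nbrs E a = {xa}"
    and bxa: "b \<in> Bh ` in_nbrs E xa"
    and B: "is_bracket V E B" and B': "is_bracket V E B'"
    and \<sigma>: "\<forall>x\<in>matches V E. \<sigma> x > 0"
    and sa: "score V E \<sigma> (bracket_with V E Bh a) B = score V E \<sigma> (bracket_with V E Bh a) B'"
    and sb: "score V E \<sigma> (bracket_with V E Bh b) B = score V E \<sigma> (bracket_with V E Bh b) B'"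
  shows "\<forall>x\<in>matches V E. B x = a \<longleftrightarrow> B' x = a"
proof -
  define A where "A = {u. (xa, u) \<in> E\<^sup>*}"
  define M where "M = matches V E"
  have EV: "E \<subseteq> V \<times> V" by (rule set_EV[OF T])
  have finV: "finite V" using T unfolding single_elim_tournament_def by blast
  have axa: "(a, xa) \<in> E" using xa by (auto simp: out_nbrs_def)
  obtain v where v: "(v, xa) \<in> E" "Bh v = b" using bxa by (auto simp: in_nbrs_def)
  have vV: "v \<in> V" using v EV by blast
  have bv: "(b, v) \<in> E\<^sup>*" using bracket_below[OF T Bh vV] v unfolding players_below_def by auto
  have AM: "A \<subseteq> M"
  proof
    fix x assume "x \<in> A"
    then have h: "(xa, x) \<in> E\<^sup>*" by (simp add: A_def)
    have ax: "(a, x) \<in> E\<^sup>+" using axa h by (rule rtrancl_into_trancl2)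
    then obtain y where "(y, x) \<in> E" by (meson tranclE)
    then show "x \<in> M" using EV by (auto simp: M_def matches_def players_def in_nbrs_def)
  qed
  have finA: "finite A" using AM finV by (auto simp: M_def matches_def intro: finite_subset)
  have aP: "a \<in> players_below V E x \<longleftrightarrow> x \<in> A" if "x \<in> M" for x
  proof
    assume "a \<in> players_below V E x"
    then have h: "(a, x) \<in> E\<^sup>*" by (simp add: players_below_def)
    have "x \<noteq> a" using that a by (auto simp: M_def matches_def)
    then have "(a, x) \<in> E\<^sup>+" using h by (auto simp: rtrancl_eq_or_trancl)
    then obtain y where y: "(a, y) \<in> E" "(y, x) \<in> E\<^sup>*" by (meson tranclD)
    have "y = xa" using y(1) xa by (auto simp: out_nbrs_def)
    then show "x \<in> A" using y by (simp add: A_def)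
  next
    assume "x \<in> A"
    then show "a \<in> players_below V E x" using a axa
      by (auto simp: A_def players_below_def intro: converse_rtrancl_into_rtrancl)
  qed
  have bA: "(b, x) \<in> E\<^sup>*" if "x \<in> A" for x
    using that bv v(1) by (auto simp: A_def intro: rtrancl_trans rtrancl_into_rtrancl)
  have bwA: "bracket_with V E Bh b x = (if x \<in> A then b else Bh x)" if "x \<in> M" for x
  proof (cases "x \<in> A")
    case True
    then show ?thesis using bA b by (auto simp: bracket_with_def players_below_def)
  next
    case False
    show ?thesis
    proof (cases "(b, x) \<in> E\<^sup>*")
      case False
      then show ?thesis using \<open>x \<notin> A\<close> by (auto simp: bracket_with_def players_below_def)
    next
      case True
      from single_valued_confluent[OF set_sv[OF T] True bv]
      have "Bh x = b"
      proof
        assume "(x, v) \<in> E\<^sup>*"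
        then show "Bh x = b" using set_L1[OF T Bh _ True v(2)] by blast
      next
        assume vx: "(v, x) \<in> E\<^sup>*"
        show "Bh x = b"
        proof (cases "v = x")
          case True then show ?thesis using v by simp
        next
          case False
          then have "(v, x) \<in> E\<^sup>+" using vx by (auto simp: rtrancl_eq_or_trancl)
          then obtain y where y: "(v, y) \<in> E" "(y, x) \<in> E\<^sup>*" by (meson tranclD)
          have "y = xa" using set_sv[OF T] y(1) v(1) by (auto dest: single_valuedD)
          then show ?thesis using y \<open>x \<notin> A\<close> by (simp add: A_def)
        qed
      qed
      then show ?thesis using \<open>x \<notin> A\<close> by (auto simp: bracket_with_def)
    qed
  qed
  have awA: "bracket_with V E Bh a x = (if x \<in> A then a else Bh x)" if "x \<in> M" for x
    using aP[OF that] by (auto simp: bracket_with_def)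
  define F where "F C = sum \<sigma> {x \<in> M - A. Bh x = C x}" for C
  define Sa where "Sa C = {x \<in> A. C x = a}" for C
  define Sb where "Sb C = {x \<in> A. C x = b}" for C
  have finM: "finite M" using finV by (auto simp: M_def matches_def)
  have decomp: "score V E \<sigma> (bracket_with V E Bh c) C = F C + sum \<sigma> {x \<in> A. C x = c}"
    if "\<And>x. x \<in> M \<Longrightarrow> bracket_with V E Bh c x = (if x \<in> A then c else Bh x)" for c C
  proof -
    have "{x \<in> matches V E. bracket_with V E Bh c x = C x}
        = {x \<in> M - A. Bh x = C x} \<union> {x \<in> A. C x = c}"
      using that AM by (auto simp: M_def split: if_splits)
    moreover have "sum \<sigma> ({x \<in> M - A. Bh x = C x} \<union> {x \<in> A. C x = c})
        = F C + sum \<sigma> {x \<in> A. C x = c}"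
      unfolding F_def using finM finA by (intro sum.union_disjoint) auto
    ultimately show ?thesis unfolding score_def by simp
  qed
  have ea: "F B + sum \<sigma> (Sa B) = F B' + sum \<sigma> (Sa B')"
    using sa decomp[of a, OF awA] unfolding Sa_def by metis
  have eb: "F B + sum \<sigma> (Sb B) = F B' + sum \<sigma> (Sb B')"
    using sb decomp[of b, OF bwA] unfolding Sb_def by metis
  have chain: "(x, y) \<in> E\<^sup>* \<or> (y, x) \<in> E\<^sup>*" if "x \<in> A" "y \<in> A" for x y
    using single_valued_confluent[OF set_sv[OF T]] that by (auto simp: A_def)
  have down: "y \<in> Sa C" if "is_bracket V E C" "x \<in> Sa C" "y \<in> A" "(y, x) \<in> E\<^sup>*" for C x y
  proof -
    have "(a, y) \<in> E\<^sup>*" using that(3) axa by (auto simp: A_def intro: converse_rtrancl_into_rtrancl)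
    then show ?thesis using set_L1[OF T that(1) that(4)] that by (auto simp: Sa_def)
  qed
  have downb: "y \<in> Sb C" if "is_bracket V E C" "x \<in> Sb C" "y \<in> A" "(y, x) \<in> E\<^sup>*" for C x y
    using set_L1[OF T that(1) that(4) bA[OF that(3)]] that by (auto simp: Sb_def)
  have xaA: "xa \<in> A" by (simp add: A_def)
  have excl: "Sa C = {} \<or> Sb C = {}" if "is_bracket V E C" for C
  proof (rule ccontr)
    assume "\<not> ?thesis"
    then obtain x y where "x \<in> Sa C" "y \<in> Sb C" by blast
    moreover then have "(xa, x) \<in> E\<^sup>*" "(xa, y) \<in> E\<^sup>*" by (auto simp: Sa_def Sb_def A_def)
    ultimately have "xa \<in> Sa C" "xa \<in> Sb C"
      using down[OF that] downb[OF that] xaA by blast+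
    then show False using ab by (auto simp: Sa_def Sb_def)
  qed
  have comp: "Sa B \<subseteq> Sa B' \<or> Sa B' \<subseteq> Sa B"
  proof (rule ccontr)
    assume "\<not> ?thesis"
    then obtain x y where xy: "x \<in> Sa B" "x \<notin> Sa B'" "y \<in> Sa B'" "y \<notin> Sa B" by blast
    have "x \<in> A" "y \<in> A" using xy by (auto simp: Sa_def)
    then show False using chain[of x y] down[OF B, of x y] down[OF B', of y x] xy by blast
  qed
  have SaA: "Sa C \<subseteq> A" "Sb C \<subseteq> A" for C by (auto simp: Sa_def Sb_def)
  have pos: "\<forall>x\<in>A. \<sigma> x > 0" using \<sigma> AM by (auto simp: M_def)
  have nn: "sum \<sigma> (Sb C) \<ge> 0" for C using pos SaA(2)[of C] by (intro sum_nonneg) (meson less_imp_le subsetD)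
  have less: "sum \<sigma> S < sum \<sigma> S'" if "S \<subset> S'" "S' \<subseteq> A" for S S'
    using sum_strict_sub[OF that(1)] that finA pos by (meson finite_subset subsetD)
  have eq: "Sa B = Sa B'"
  proof (rule ccontr)
    assume ne: "Sa B \<noteq> Sa B'"
    show False
    proof (cases "Sa B \<subseteq> Sa B'")
      case True
      then have lt: "sum \<sigma> (Sa B) < sum \<sigma> (Sa B')" using ne less SaA by blast
      have "Sa B' \<noteq> {}" using True ne by blast
      then have "Sb B' = {}" using excl[OF B'] by blast
      then show False using ea eb lt nn[of B] by simp
    next
      case False
      then have sub: "Sa B' \<subset> Sa B" using comp ne by blast
      then have lt: "sum \<sigma> (Sa B') < sum \<sigma> (Sa B)" using less SaA by blast
      have "Sa B \<noteq> {}" using sub by blast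
      then have "Sb B = {}" using excl[OF B] by blast
      then show False using ea eb lt nn[of B'] by simp
    qed
  qed
  have key: "C x = a \<longleftrightarrow> x \<in> Sa C" if "is_bracket V E C" "x \<in> M" for C x
  proof
    assume Cx: "C x = a"
    have "x \<in> V" using that(2) by (simp add: M_def matches_def)
    then have "a \<in> players_below V E x" using bracket_below[OF T that(1)] Cx by metis
    then show "x \<in> Sa C" using aP[OF that(2)] Cx by (simp add: Sa_def)
  qed (simp add: Sa_def)
  show ?thesis using key[OF B] key[OF B'] eq by (auto simp: M_def)
qed

end
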